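(* Let $(X,d)$ be a bounded ultrametric space. Then the metric $d(x,y)$ has the strong Erdős–Hajnal property: for every $\varepsilon>0$ there is $\delta>0$ such that for all finite $A,B\subseteq X$ there are $A_0\subseteq A$, $B_0\subseteq B$ with $|A_0|\geq\delta|A|$, $|B_0|\geq\delta|B|$ and $|d(a,b)-d(a',b')|\leq\varepsilon$ for all $a,a'\in A_0$, $b,b'\in B_0$. *)

theory Defs
  imports "HOL-Analysis.Analysis"
begin

definition metric_on :: "'a set \<Rightarrow> ('a \<Rightarrow> 'a \<Rightarrow> real) \<Rightarrow> bool" where
  "metric_on X d \<longleftrightarrow>
     (\<forall>x\<in>X. \<forall>y\<in>X. d x y \<ge> 0 \<and> (d x y = 0 \<longleftrightarrow> x = y) \<and> d x y = d y x) \<and>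
     (\<forall>x\<in>X. \<forall>y\<in>X. \<forall>z\<in>X. d x z \<le> d x y + d y z)"

definition ultrametric_on :: "'a set \<Rightarrow> ('a \<Rightarrow> 'a \<Rightarrow> real) \<Rightarrow> bool" where
  "ultrametric_on X d \<longleftrightarrow> metric_on X d \<and>
     (\<forall>x\<in>X. \<forall>y\<in>X. \<forall>z\<in>X. d x z \<le> max (d x y) (d y z))"

definition bounded_metric_on :: "'a set \<Rightarrow> ('a \<Rightarrow> 'a \<Rightarrow> real) \<Rightarrow> bool" where
  "bounded_metric_on X d \<longleftrightarrow> (\<exists>M. \<forall>x\<in>X. \<forall>y\<in>X. d x y \<le> M)"

definition strong_EH :: "'a set \<Rightarrow> ('a \<Rightarrow> 'a \<Rightarrow> real) \<Rightarrow> bool" where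
  "strong_EH X f \<longleftrightarrow>
     (\<forall>\<epsilon>>0. \<exists>\<delta>>0. \<forall>A B. finite A \<and> finite B \<and> A \<subseteq> X \<and> B \<subseteq> X \<longrightarrow>
        (\<exists>A0 B0. A0 \<subseteq> A \<and> B0 \<subseteq> B \<and>
           real (card A0) \<ge> \<delta> * real (card A) \<and> real (card B0) \<ge> \<delta> * real (card B) \<and>
           (\<forall>a\<in>A0. \<forall>a'\<in>A0. \<forall>b\<in>B0. \<forall>b'\<in>B0. \<bar>f a b - f a' b'\<bar> \<le> \<epsilon>)))"

end

theory Submission
  imports Defs
begin

lemma um_tri: "ultrametric_on X d \<Longrightarrow> x\<in>X \<Longrightarrow> y\<in>X \<Longrightarrow> z\<in>X \<Longrightarrow> d x z \<le> max (d x y) (d y z)"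
  unfolding ultrametric_on_def by blast

lemma um_sym: "ultrametric_on X d \<Longrightarrow> x\<in>X \<Longrightarrow> y\<in>X \<Longrightarrow> d x y = d y x"
  unfolding ultrametric_on_def metric_on_def by blast

lemma um_refl: "ultrametric_on X d \<Longrightarrow> x\<in>X \<Longrightarrow> d x x = 0"
  unfolding ultrametric_on_def metric_on_def by blast

lemma um_nonneg: "ultrametric_on X d \<Longrightarrow> x\<in>X \<Longrightarrow> y\<in>X \<Longrightarrow> d x y \<ge> 0"
  unfolding ultrametric_on_def metric_on_def by blast

lemma um_trans: "ultrametric_on X d \<Longrightarrow> x\<in>X \<Longrightarrow> y\<in>X \<Longrightarrow> z\<in>X \<Longrightarrow> d x y \<le> r \<Longrightarrow> d y z \<le> r \<Longrightarrow> d x z \<le> r"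
  using um_tri[of X d x y z] by simp

lemma greedy:
  fixes A :: "'a set" and P :: "'a \<Rightarrow> 'a \<Rightarrow> bool" and t c :: real
  assumes "finite T" "finite A" "\<forall>x\<in>T. real (card {a\<in>A. P x a}) \<le> c" "0 \<le> t" "0 \<le> c"
    "t \<le> real (card {a\<in>A. \<exists>s\<in>T. P s a})"
  shows "\<exists>T'\<subseteq>T. t \<le> real (card {a\<in>A. \<exists>s\<in>T'. P s a}) \<and> real (card {a\<in>A. \<exists>s\<in>T'. P s a}) \<le> t + c"
  using assms
proof (induction T rule: finite_induct)
  case empty
  then show ?case by simp
next
  case (insert x T)
  show ?case
  proof (cases "t \<le> real (card {a\<in>A. \<exists>s\<in>T. P s a})")
    case True
    have "\<forall>y\<in>T. real (card {a\<in>A. P y a}) \<le> c" using insert.prems(2) by simp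
    then obtain T' where "T' \<subseteq> T" "t \<le> real (card {a\<in>A. \<exists>s\<in>T'. P s a}) \<and> real (card {a\<in>A. \<exists>s\<in>T'. P s a}) \<le> t + c"
      using insert.IH[OF insert.prems(1) _ insert.prems(3,4) True] by blast
    then show ?thesis by (intro exI[of _ T']) auto
  next
    case False
    have eq: "{a\<in>A. \<exists>s\<in>insert x T. P s a} = {a\<in>A. P x a} \<union> {a\<in>A. \<exists>s\<in>T. P s a}" by auto
    have "card {a\<in>A. \<exists>s\<in>insert x T. P s a} \<le> card {a\<in>A. P x a} + card {a\<in>A. \<exists>s\<in>T. P s a}"
      unfolding eq by (rule card_Un_le)
    hence "real (card {a\<in>A. \<exists>s\<in>insert x T. P s a}) \<le> real (card {a\<in>A. P x a}) + real (card {a\<in>A. \<exists>s\<in>T. P s a})"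
      by linarith
    moreover have "real (card {a\<in>A. P x a}) \<le> c" using insert by simp
    ultimately show ?thesis using False insert.prems by (intro exI[of _ "insert x T"]) auto
  qed
qed

lemma mainQ:
  fixes X :: "'a set" and d :: "'a \<Rightarrow> 'a \<Rightarrow> real"
  assumes um: "ultrametric_on X d" and ep: "\<epsilon> > 0"
  shows "\<forall>A B. finite A \<and> finite B \<and> A \<subseteq> X \<and> B \<subseteq> X \<and> (\<forall>a\<in>A. \<forall>b\<in>B. d a b \<le> real n * \<epsilon>) \<longrightarrow>
    (\<exists>A0 B0 lo. A0 \<subseteq> A \<and> B0 \<subseteq> B \<and> real (card A0) \<ge> (1/4)^n * real (card A) \<and>
       real (card B0) \<ge> (1/4)^n * real (card B) \<and>
       (\<forall>a\<in>A0. \<forall>b\<in>B0. lo \<le> d a b \<and> d a b \<le> lo + \<epsilon>))"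
proof (induction n)
  case 0
  show ?case
  proof (intro allI impI)
    fix A B assume h: "finite A \<and> finite B \<and> A \<subseteq> X \<and> B \<subseteq> X \<and> (\<forall>a\<in>A. \<forall>b\<in>B. d a b \<le> real 0 * \<epsilon>)"
    have "\<forall>a\<in>A. \<forall>b\<in>B. 0 \<le> d a b \<and> d a b \<le> 0 + \<epsilon>"
      using h um_nonneg[OF um] ep by fastforce
    then show "\<exists>A0 B0 lo. A0 \<subseteq> A \<and> B0 \<subseteq> B \<and> real (card A0) \<ge> (1/4)^0 * real (card A) \<and>
       real (card B0) \<ge> (1/4)^0 * real (card B) \<and>
       (\<forall>a\<in>A0. \<forall>b\<in>B0. lo \<le> d a b \<and> d a b \<le> lo + \<epsilon>)"
      by (intro exI[of _ A] exI[of _ B] exI[of _ 0]) auto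
  qed
next
  case (Suc n)
  define r where "r = real n * \<epsilon>"
  have r0: "r \<ge> 0" using ep r_def by simp
  have q: "(1/4::real)^Suc n \<le> 1/4" using power_le_one[of "1/4::real" n] by simp
  have q2: "(1/4::real)^Suc n = (1/4)^n / 4" by simp
  show ?case
  proof (intro allI impI)
    fix A B assume h: "finite A \<and> finite B \<and> A \<subseteq> X \<and> B \<subseteq> X \<and> (\<forall>a\<in>A. \<forall>b\<in>B. d a b \<le> real (Suc n) * \<epsilon>)"
    hence fA: "finite A" and fB: "finite B" and AX: "A \<subseteq> X" and BX: "B \<subseteq> X"
      and bd: "\<forall>a\<in>A. \<forall>b\<in>B. d a b \<le> r + \<epsilon>" by (auto simp: r_def algebra_simps)
    let ?G = "\<exists>A0 B0 lo. A0 \<subseteq> A \<and> B0 \<subseteq> B \<and> real (card A0) \<ge> (1/4)^Suc n * real (card A) \<and>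
       real (card B0) \<ge> (1/4)^Suc n * real (card B) \<and>
       (\<forall>a\<in>A0. \<forall>b\<in>B0. lo \<le> d a b \<and> d a b \<le> lo + \<epsilon>)"
    have split: "?G" if "A0 \<subseteq> A" "B0 \<subseteq> B" "real (card A0) \<ge> real (card A) / 4"
        "real (card B0) \<ge> real (card B) / 4" "\<forall>a\<in>A0. \<forall>b\<in>B0. \<not> d a b \<le> r" for A0 B0
    proof -
      have "real (card A0) \<ge> (1/4)^Suc n * real (card A)"
        using that(3) mult_right_mono[OF q, of "real (card A)"] by simp
      moreover have "real (card B0) \<ge> (1/4)^Suc n * real (card B)"
        using that(4) mult_right_mono[OF q, of "real (card B)"] by simp
      moreover have "\<forall>a\<in>A0. \<forall>b\<in>B0. r \<le> d a b \<and> d a b \<le> r + \<epsilon>"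
      proof (intro ballI)
        fix a b assume ab: "a \<in> A0" "b \<in> B0"
        have "\<not> d a b \<le> r" using that(5) ab by blast
        moreover have "d a b \<le> r + \<epsilon>" using bd ab that(1,2) by blast
        ultimately show "r \<le> d a b \<and> d a b \<le> r + \<epsilon>" by linarith
      qed
      ultimately show ?G using that(1,2) by (intro exI[of _ A0] exI[of _ B0] exI[of _ r]) simp
    qed
    show ?G
    proof (cases "A = {} \<or> B = {}")
      case True
      have "(1/4)^Suc n * real (card A) \<le> real (card A)" "(1/4)^Suc n * real (card B) \<le> real (card B)"
        using mult_right_mono[OF q, of "real (card A)"] mult_right_mono[OF q, of "real (card B)"] by auto
      moreover have "\<forall>a\<in>A. \<forall>b\<in>B. 0 \<le> d a b \<and> d a b \<le> 0 + \<epsilon>" using True by blast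
      ultimately show ?thesis by (intro exI[of _ A] exI[of _ B] exI[of _ 0]) simp
    next
      case False
      hence Ane: "A \<noteq> {}" and Bne: "B \<noteq> {}" by auto
      show ?thesis
      proof (cases "\<exists>x\<in>A. real (card {a\<in>A. d x a \<le> r}) \<ge> real (card A) / 4")
        case True
        then obtain x where xA: "x \<in> A" and big: "real (card {a\<in>A. d x a \<le> r}) \<ge> real (card A) / 4" by blast
        have xX: "x \<in> X" using xA AX by auto
        define Ax where "Ax = {a\<in>A. d x a \<le> r}"
        define Bx where "Bx = {b\<in>B. d x b \<le> r}"
        have cB: "card B = card Bx + card (B - Bx)"
          using card_Diff_subset[of Bx B] card_mono[of B Bx] fB by (auto simp: Bx_def)
        show ?thesis
        proof (cases "real (card Bx) \<ge> real (card B) / 2")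
          case True
          have "\<forall>a\<in>Ax. \<forall>b\<in>Bx. d a b \<le> real n * \<epsilon>"
          proof (intro ballI)
            fix a b assume "a \<in> Ax" "b \<in> Bx"
            then have "a \<in> X" "b \<in> X" "d a x \<le> r" "d x b \<le> r"
              using AX BX xX um_sym[OF um, of x a] by (auto simp: Ax_def Bx_def)
            then show "d a b \<le> real n * \<epsilon>" using um_trans[OF um, of a x b r] xX r_def by simp
          qed
          moreover have "finite Ax" "finite Bx" "Ax \<subseteq> X" "Bx \<subseteq> X"
            using fA fB AX BX by (auto simp: Ax_def Bx_def)
          ultimately have pre: "finite Ax \<and> finite Bx \<and> Ax \<subseteq> X \<and> Bx \<subseteq> X \<and> (\<forall>a\<in>Ax. \<forall>b\<in>Bx. d a b \<le> real n * \<epsilon>)"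
            by blast
          obtain A0 B0 lo where o: "A0 \<subseteq> Ax" "B0 \<subseteq> Bx"
            "real (card A0) \<ge> (1/4)^n * real (card Ax)" "real (card B0) \<ge> (1/4)^n * real (card Bx)"
            "\<forall>a\<in>A0. \<forall>b\<in>B0. lo \<le> d a b \<and> d a b \<le> lo + \<epsilon>"
            using Suc.IH[rule_format, OF pre] by blast
          have p0: "(0::real) \<le> (1/4)^n" by simp
          have "(1/4)^Suc n * real (card A) = (1/4)^n * (real (card A) / 4)" by simp
          also have "\<dots> \<le> (1/4)^n * real (card Ax)" using big Ax_def mult_left_mono[OF _ p0] by simp
          finally have c1: "real (card A0) \<ge> (1/4)^Suc n * real (card A)" using o(3) by linarith
          have "(1/4)^Suc n * real (card B) \<le> (1/4)^n * (real (card B) / 2)" by simp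
          also have "\<dots> \<le> (1/4)^n * real (card Bx)" using True mult_left_mono[OF _ p0] by simp
          finally have c2: "real (card B0) \<ge> (1/4)^Suc n * real (card B)" using o(4) by linarith
          have "A0 \<subseteq> A" "B0 \<subseteq> B" using o Ax_def Bx_def by auto
          then show ?thesis using c1 c2 o(5) by (intro exI[of _ A0] exI[of _ B0] exI[of _ lo]) simp
        next
          case False
          have h4: "real (card (B - Bx)) \<ge> real (card B) / 4" using False cB by simp
          have h5: "\<forall>a\<in>Ax. \<forall>b\<in>B - Bx. \<not> d a b \<le> r"
          proof (intro ballI notI)
            fix a b assume "a \<in> Ax" "b \<in> B - Bx" "d a b \<le> r"
            then have "a \<in> X" "b \<in> X" "d x a \<le> r" "d x b > r"
              using AX BX by (auto simp: Ax_def Bx_def)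
            then show False using um_trans[OF um, of x a b r] xX \<open>d a b \<le> r\<close> by simp
          qed
          have h1: "Ax \<subseteq> A" by (auto simp: Ax_def)
          have h3: "real (card Ax) \<ge> real (card A) / 4" using big by (simp add: Ax_def)
          show ?thesis by (rule split[OF h1 _ h3 h4 h5]) auto
        qed
      next
        case False
        have small: "\<forall>x\<in>A. real (card {a\<in>A. d x a \<le> r}) \<le> real (card A) / 4"
          using False by auto
        have clA: "{a\<in>A. \<exists>s\<in>A. d s a \<le> r} = A"
        proof
          show "A \<subseteq> {a\<in>A. \<exists>s\<in>A. d s a \<le> r}"
          proof
            fix a assume "a \<in> A"
            then have "d a a \<le> r" using um_refl[OF um, of a] AX r0 by auto
            then show "a \<in> {a\<in>A. \<exists>s\<in>A. d s a \<le> r}" using \<open>a \<in> A\<close> by blast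
          qed
        qed blast
        obtain T where T: "T \<subseteq> A" "real (card A) / 4 \<le> real (card {a\<in>A. \<exists>s\<in>T. d s a \<le> r})"
          "real (card {a\<in>A. \<exists>s\<in>T. d s a \<le> r}) \<le> real (card A) / 4 + real (card A) / 4"
          using greedy[of A A "\<lambda>s a. d s a \<le> r" "real (card A) / 4" "real (card A) / 4"] fA small clA
          by auto
        define GA where "GA = {a\<in>A. \<exists>s\<in>T. d s a \<le> r}"
        define GB where "GB = {b\<in>B. \<exists>s\<in>T. d s b \<le> r}"
        have cA: "card A = card GA + card (A - GA)"
          using card_Diff_subset[of GA A] card_mono[of A GA] fA by (auto simp: GA_def)
        have cB: "card B = card GB + card (B - GB)"
          using card_Diff_subset[of GB B] card_mono[of B GB] fB by (auto simp: GB_def)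
        show ?thesis
        proof (cases "real (card GB) \<ge> real (card B) / 2")
          case True
          have h5: "\<forall>a\<in>A - GA. \<forall>b\<in>GB. \<not> d a b \<le> r"
          proof (intro ballI notI)
            fix a b assume a: "a \<in> A - GA" and b: "b \<in> GB" and ab: "d a b \<le> r"
            then obtain s where s: "s \<in> T" "d s b \<le> r" by (auto simp: GB_def)
            have "a \<in> X" "b \<in> X" "s \<in> X" using a b s T AX BX by (auto simp: GB_def)
            then have "d s a \<le> r" using um_trans[OF um, of s b a r] s ab um_sym[OF um, of a b] by simp
            then show False using a s by (auto simp: GA_def)
          qed
          have h3: "real (card (A - GA)) \<ge> real (card A) / 4" using cA T(3) GA_def by simp
          have h4: "real (card GB) \<ge> real (card B) / 4" using True by simp
          have h2: "GB \<subseteq> B" by (auto simp: GB_def)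
          show ?thesis by (rule split[OF _ h2 h3 h4 h5]) auto
        next
          case False
          have h5: "\<forall>a\<in>GA. \<forall>b\<in>B - GB. \<not> d a b \<le> r"
          proof (intro ballI notI)
            fix a b assume a: "a \<in> GA" and b: "b \<in> B - GB" and ab: "d a b \<le> r"
            then obtain s where s: "s \<in> T" "d s a \<le> r" by (auto simp: GA_def)
            have "a \<in> X" "b \<in> X" "s \<in> X" using a b s T AX BX by (auto simp: GA_def)
            then have "d s b \<le> r" using um_trans[OF um, of s a b r] s ab by simp
            then show False using b s by (auto simp: GB_def)
          qed
          have h4: "real (card (B - GB)) \<ge> real (card B) / 4" using cB False by simp
          have h3: "real (card GA) \<ge> real (card A) / 4" using T(2) by (simp add: GA_def)
          have h1: "GA \<subseteq> A" by (auto simp: GA_def)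
          show ?thesis by (rule split[OF h1 _ h3 h4 h5]) auto
        qed
      qed
    qed
  qed
qed

theorem mainTheorem13:
  fixes X :: "'a set" and d :: "'a \<Rightarrow> 'a \<Rightarrow> real"
  assumes "ultrametric_on X d" and "bounded_metric_on X d"
  shows "strong_EH X d"
  unfolding strong_EH_def
proof (intro allI impI)
  fix \<epsilon> :: real assume ep: "\<epsilon> > 0"
  obtain M where M: "\<forall>x\<in>X. \<forall>y\<in>X. d x y \<le> M" using assms(2) unfolding bounded_metric_on_def by blast
  define n where "n = nat \<lceil>M / \<epsilon>\<rceil>"
  have "M / \<epsilon> \<le> real n" unfolding n_def by linarith
  hence Mn: "M \<le> real n * \<epsilon>" using ep by (simp add: divide_le_eq)
  show "\<exists>\<delta>>0. \<forall>A B. finite A \<and> finite B \<and> A \<subseteq> X \<and> B \<subseteq> X \<longrightarrow>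
        (\<exists>A0 B0. A0 \<subseteq> A \<and> B0 \<subseteq> B \<and>
           real (card A0) \<ge> \<delta> * real (card A) \<and> real (card B0) \<ge> \<delta> * real (card B) \<and>
           (\<forall>a\<in>A0. \<forall>a'\<in>A0. \<forall>b\<in>B0. \<forall>b'\<in>B0. \<bar>d a b - d a' b'\<bar> \<le> \<epsilon>))"
  proof (intro exI[of _ "(1/4)^n"] conjI allI impI)
    show "(0::real) < (1/4)^n" by simp
    fix A B assume h: "finite A \<and> finite B \<and> A \<subseteq> X \<and> B \<subseteq> X"
    have "\<forall>a\<in>A. \<forall>b\<in>B. d a b \<le> real n * \<epsilon>"
    proof (intro ballI)
      fix a b assume "a \<in> A" "b \<in> B"
      then have "a \<in> X" "b \<in> X" using h by auto
      then have "d a b \<le> M" using M by blast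
      then show "d a b \<le> real n * \<epsilon>" using Mn by linarith
    qed
    hence pre: "finite A \<and> finite B \<and> A \<subseteq> X \<and> B \<subseteq> X \<and> (\<forall>a\<in>A. \<forall>b\<in>B. d a b \<le> real n * \<epsilon>)"
      using h by blast
    then obtain A0 B0 lo where o: "A0 \<subseteq> A" "B0 \<subseteq> B" "real (card A0) \<ge> (1/4)^n * real (card A)"
      "real (card B0) \<ge> (1/4)^n * real (card B)"
      "\<forall>a\<in>A0. \<forall>b\<in>B0. lo \<le> d a b \<and> d a b \<le> lo + \<epsilon>"
      using mainQ[OF assms(1) ep, of n, rule_format, OF pre] by blast
    have "\<forall>a\<in>A0. \<forall>a'\<in>A0. \<forall>b\<in>B0. \<forall>b'\<in>B0. \<bar>d a b - d a' b'\<bar> \<le> \<epsilon>"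
    proof (intro ballI)
      fix a a' b b' assume "a \<in> A0" "a' \<in> A0" "b \<in> B0" "b' \<in> B0"
      then have "lo \<le> d a b" "d a b \<le> lo + \<epsilon>" "lo \<le> d a' b'" "d a' b' \<le> lo + \<epsilon>"
        using o(5) by blast+
      then show "\<bar>d a b - d a' b'\<bar> \<le> \<epsilon>" by (simp add: abs_le_iff)
    qed
    then show "\<exists>A0 B0. A0 \<subseteq> A \<and> B0 \<subseteq> B \<and>
           real (card A0) \<ge> (1/4)^n * real (card A) \<and> real (card B0) \<ge> (1/4)^n * real (card B) \<and>
           (\<forall>a\<in>A0. \<forall>a'\<in>A0. \<forall>b\<in>B0. \<forall>b'\<in>B0. \<bar>d a b - d a' b'\<bar> \<le> \<epsilon>)"
      using o(1-4) by (intro exI[of _ A0] exI[of _ B0]) simp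
  qed
qed

end
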